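(* Let $\mathtt Q$ be a probability measure and $(M_t)_{t\in\mathbb N_0}$ a nonnegative $\mathtt Q$-martingale with $M_0>0$. Let $F$ be the distribution function under $\mathtt Q$ of $\inf_{t\in\mathbb N_0}1/M_t$. If $F$ is atomless (continuous), then $\mathfrak p_t:=F(\inf_{s\le t}1/M_s)$, $t\in\mathbb N_0$, is a $\mathtt Q$-admissible anytime-valid $p$-value for $\{\mathtt Q\}$.
   Context: Setup: observations $(X_t)_{t\in\mathbb N}$, an independent $[0,1]$-uniform $U$, filtration $\mathcal F_0=\sigma(U)$, $\mathcal F_t=\sigma(U,X_1,\dots,X_t)$, $\mathcal F_\infty=\sigma(\bigcup_t\mathcal F_t)$; stopping times may be infinite. An anytime-valid $p$-value for $\{\mathtt Q\}$ is an adapted $[0,1]$-valued $(\mathfrak p_t)_{t\in\mathbb N_0}$ with $\mathtt Q(\mathfrak p_\tau\le\alpha)\le\alpha$ for all stopping times $\tau$ and $\alpha\in[0,1]$, where $\mathfrak p_\infty:=\liminf_t\mathfrak p_t$. It is $\mathtt Q$-admissible if there is no other such $p$-value $(\mathfrak p'_t)$ with $\mathtt Q(\mathfrak p'_t\le\mathfrak p_t)=1$ for all $t$ and $\mathtt Q(\mathfrak p'_t<\mathfrak p_t)>0$ for some $t$. *)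

theory Defs
  imports "HOL-Probability.Probability" "HOL-Library.Extended_Nat"
begin

definition filt :: "'a measure \<Rightarrow> ('a \<Rightarrow> real) \<Rightarrow> (nat \<Rightarrow> 'a \<Rightarrow> 'b) \<Rightarrow> 'b measure \<Rightarrow> nat \<Rightarrow> 'a measure" where
  "filt Q U X S t = sigma (space Q)
     ({U -` B \<inter> space Q | B. B \<in> sets borel} \<union>
      {X i -` B \<inter> space Q | i B. 1 \<le> i \<and> i \<le> t \<and> B \<in> sets S})"

definition obs_sigma :: "'a measure \<Rightarrow> (nat \<Rightarrow> 'a \<Rightarrow> 'b) \<Rightarrow> 'b measure \<Rightarrow> 'a measure" where
  "obs_sigma Q X S = sigma (space Q) {X i -` B \<inter> space Q | i B. 1 \<le> i \<and> B \<in> sets S}"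

definition martingale :: "'a measure \<Rightarrow> (nat \<Rightarrow> 'a measure) \<Rightarrow> (nat \<Rightarrow> 'a \<Rightarrow> real) \<Rightarrow> bool" where
  "martingale Q F M \<longleftrightarrow>
     (\<forall>t. M t \<in> borel_measurable (F t) \<and> integrable Q (M t)) \<and>
     (\<forall>s t. s \<le> t \<longrightarrow> (AE \<omega> in Q. real_cond_exp Q (F s) (M t) \<omega> = M s \<omega>))"

definition stopping_time_inf :: "(nat \<Rightarrow> 'a measure) \<Rightarrow> 'a set \<Rightarrow> ('a \<Rightarrow> enat) \<Rightarrow> bool" where
  "stopping_time_inf F \<Omega> \<tau> \<longleftrightarrow> (\<forall>t::nat. {\<omega> \<in> \<Omega>. \<tau> \<omega> = enat t} \<in> sets (F t))"

definition stopped :: "(nat \<Rightarrow> 'a \<Rightarrow> real) \<Rightarrow> ('a \<Rightarrow> enat) \<Rightarrow> 'a \<Rightarrow> real" where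
  "stopped p \<tau> \<omega> = (case \<tau> \<omega> of enat t \<Rightarrow> p t \<omega>
                       | \<infinity> \<Rightarrow> real_of_ereal (liminf (\<lambda>t. ereal (p t \<omega>))))"

definition anytime_valid :: "'a measure \<Rightarrow> (nat \<Rightarrow> 'a measure) \<Rightarrow> (nat \<Rightarrow> 'a \<Rightarrow> real) \<Rightarrow> bool" where
  "anytime_valid Q F p \<longleftrightarrow>
     (\<forall>t. p t \<in> borel_measurable (F t) \<and> (\<forall>\<omega>\<in>space Q. 0 \<le> p t \<omega> \<and> p t \<omega> \<le> 1)) \<and>
     (\<forall>\<tau> (\<alpha>::real). stopping_time_inf F (space Q) \<tau> \<longrightarrow> 0 \<le> \<alpha> \<longrightarrow> \<alpha> \<le> 1 \<longrightarrow>
        measure Q {\<omega> \<in> space Q. stopped p \<tau> \<omega> \<le> \<alpha>} \<le> \<alpha>)"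

definition admissible :: "'a measure \<Rightarrow> (nat \<Rightarrow> 'a measure) \<Rightarrow> (nat \<Rightarrow> 'a \<Rightarrow> real) \<Rightarrow> bool" where
  "admissible Q F p \<longleftrightarrow> anytime_valid Q F p \<and>
     \<not> (\<exists>p'. anytime_valid Q F p' \<and>
          (\<forall>t. measure Q {\<omega> \<in> space Q. p' t \<omega> \<le> p t \<omega>} = 1) \<and>
          (\<exists>t. measure Q {\<omega> \<in> space Q. p' t \<omega> < p t \<omega>} > 0))"

end

theory Submission
  imports Defs
begin

definition filtG :: "'a measure \<Rightarrow> ('a \<Rightarrow> real) \<Rightarrow> (nat \<Rightarrow> 'a \<Rightarrow> 'b) \<Rightarrow> 'b measure \<Rightarrow> nat \<Rightarrow> 'a set set" where
  "filtG Q U X S t = {U -` B \<inter> space Q | B. B \<in> sets borel} \<union>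
      {X i -` B \<inter> space Q | i B. 1 \<le> i \<and> i \<le> t \<and> B \<in> sets S}"

lemma filtG_Pow: "filtG Q U X S t \<subseteq> Pow (space Q)"
  unfolding filtG_def by auto

lemma filtG_sets: "U \<in> borel_measurable Q \<Longrightarrow> (\<And>i. X i \<in> measurable Q S) \<Longrightarrow> filtG Q U X S t \<subseteq> sets Q"
  unfolding filtG_def by (auto intro!: measurable_sets)

lemma filtG_mono:
  assumes st: "s \<le> t" shows "filtG Q U X S s \<subseteq> filtG Q U X S t"
proof
  fix A assume "A \<in> filtG Q U X S s"
  then consider B where "A = U -` B \<inter> space Q" "B \<in> sets borel"
    | i B where "A = X i -` B \<inter> space Q" "1 \<le> i" "i \<le> s" "B \<in> sets S"
    unfolding filtG_def by blast
  then show "A \<in> filtG Q U X S t"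
  proof cases
    case 1 then show ?thesis unfolding filtG_def by blast
  next
    case 2
    from 2(3) st have "i \<le> t" by (rule le_trans)
    with 2 show ?thesis unfolding filtG_def by blast
  qed
qed

lemma filt_eq: "filt Q U X S t = sigma (space Q) (filtG Q U X S t)"
  unfolding filt_def filtG_def by simp

lemma filt_sets_eq: "sets (filt Q U X S t) = sigma_sets (space Q) (filtG Q U X S t)"
  unfolding filt_eq using filtG_Pow by (rule sets_measure_of)

lemma filt_space: "space (filt Q U X S t) = space Q"
  unfolding filt_eq using filtG_Pow by (rule space_measure_of)

lemma filt_sub: "U \<in> borel_measurable Q \<Longrightarrow> (\<And>i. X i \<in> measurable Q S) \<Longrightarrow> sets (filt Q U X S t) \<subseteq> sets Q"
proof -
  assume a: "U \<in> borel_measurable Q" "\<And>i. X i \<in> measurable Q S"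
  have "sigma_sets (space Q) (filtG Q U X S t) \<subseteq> sets Q"
    using filtG_sets[OF a] by (rule sets.sigma_sets_subset)
  then show ?thesis by (simp only: filt_sets_eq)
qed

lemma filt_mono: "s \<le> t \<Longrightarrow> sets (filt Q U X S s) \<subseteq> sets (filt Q U X S t)"
proof -
  assume "s \<le> t"
  then have "sigma_sets (space Q) (filtG Q U X S s) \<subseteq> sigma_sets (space Q) (filtG Q U X S t)"
    by (intro sigma_sets_mono' filtG_mono)
  then show ?thesis by (simp only: filt_sets_eq)
qed

lemma inv_ennreal_meas[measurable]:
  "f \<in> borel_measurable N \<Longrightarrow> (\<lambda>\<omega>. 1 / ennreal (f \<omega>)) \<in> borel_measurable N"
  unfolding divide_ennreal_def by simp

lemma downset_borel:
  fixes D :: "ennreal set"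
  assumes "\<And>x y. y \<in> D \<Longrightarrow> x \<le> y \<Longrightarrow> x \<in> D"
  shows "D \<in> sets borel"
proof (cases "Sup D \<in> D")
  case True
  have eq: "D = {..Sup D}"
  proof
    show "D \<subseteq> {..Sup D}" by (auto intro: Sup_upper)
    show "{..Sup D} \<subseteq> D" using assms True by blast
  qed
  show ?thesis by (subst eq) (rule borel_closed, rule closed_atMost)
next
  case False
  have eq: "D = {..<Sup D}"
  proof
    show "D \<subseteq> {..<Sup D}"
    proof
      fix x assume "x \<in> D"
      then have "x \<le> Sup D" "x \<noteq> Sup D" using False by (auto intro: Sup_upper)
      then show "x \<in> {..<Sup D}" by simp
    qed
    show "{..<Sup D} \<subseteq> D" using assms by (auto simp: less_Sup_iff)
  qed
  show ?thesis by (subst eq) (rule borel_open, rule open_lessThan)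
qed

lemma mono_ennreal_meas:
  fixes g :: "ennreal \<Rightarrow> real"
  assumes "mono g"
  shows "g \<in> borel_measurable borel"
proof (rule borel_measurableI_le)
  fix a
  have "{w. g w \<le> a} \<in> sets borel"
    by (rule downset_borel) (use assms in \<open>auto dest: monoD intro: order_trans\<close>)
  then show "{w \<in> space borel. g w \<le> a} \<in> sets borel" by simp
qed

locale avs = prob_space Q for Q :: "'a measure" +
  fixes F :: "nat \<Rightarrow> 'a measure" and M :: "nat \<Rightarrow> 'a \<Rightarrow> real"
  assumes Fspace: "\<And>t. space (F t) = space Q"
    and Fsets: "\<And>t. sets (F t) \<subseteq> sets Q"
    and Fmono: "\<And>s t. s \<le> t \<Longrightarrow> sets (F s) \<subseteq> sets (F t)"
    and mart: "martingale Q F M"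
    and Mnn: "\<And>t. AE \<omega> in Q. M t \<omega> \<ge> 0"
    and atomless: "\<And>x. measure Q {\<omega>\<in>space Q. (INF t. 1 / ennreal (M t \<omega>)) = x} = 0"
begin

definition "Y \<omega> = (INF t. 1 / ennreal (M t \<omega>))"
definition "m t \<omega> = (INF s\<in>{..t}. 1 / ennreal (M s \<omega>))"
definition "G y = measure Q {\<omega>\<in>space Q. Y \<omega> \<le> y}"
definition "p t \<omega> = G (m t \<omega>)"

lemma subalg: "subalgebra Q (F t)"
  unfolding subalgebra_def using Fspace Fsets by auto

lemma sfs: "sigma_finite_subalgebra Q (F t)"
proof -
  interpret finite_measure_subalgebra Q "F t"
    by unfold_locales (rule subalg)
  show ?thesis by (rule sigma_finite_subalgebra_axioms)
qed

lemma M_F: "s \<le> t \<Longrightarrow> M s \<in> borel_measurable (F t)"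
proof -
  assume "s \<le> t"
  have "M s \<in> borel_measurable (F s)" using mart unfolding martingale_def by auto
  moreover have "borel_measurable (F s) \<subseteq> borel_measurable (F t)"
    by (rule measurable_mono) (use Fmono[OF \<open>s \<le> t\<close>] Fspace in auto)
  ultimately show ?thesis by auto
qed

lemma M_int: "integrable Q (M t)"
  using mart unfolding martingale_def by auto

lemma M_Q[measurable]: "M s \<in> borel_measurable Q"
  using measurable_from_subalg[OF subalg M_F[OF order_refl]] .

lemma Y_meas[measurable]: "Y \<in> borel_measurable Q"
  unfolding Y_def by measurable

lemma m_F: "m t \<in> borel_measurable (F t)"
proof -
  have [measurable]: "M s \<in> borel_measurable (F t)" if "s \<in> {..t}" for s
    using M_F that by auto
  show ?thesis unfolding m_def by measurable
qed

lemma Yle_sets[measurable]: "{\<omega>\<in>space Q. Y \<omega> \<le> y} \<in> sets Q"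
  by measurable

lemma G_mono: "mono G"
proof (rule monoI)
  fix x y :: ennreal assume xy: "x \<le> y"
  have "{\<omega>\<in>space Q. Y \<omega> \<le> x} \<subseteq> {\<omega>\<in>space Q. Y \<omega> \<le> y}"
  proof
    fix w assume "w \<in> {\<omega>\<in>space Q. Y \<omega> \<le> x}"
    then have "w \<in> space Q" "Y w \<le> y" using order.trans[OF _ xy] by auto
    then show "w \<in> {\<omega>\<in>space Q. Y \<omega> \<le> y}" by simp
  qed
  then show "G x \<le> G y" unfolding G_def by (rule finite_measure_mono) simp
qed

lemma G_01: "0 \<le> G y" "G y \<le> 1"
  unfolding G_def by auto

lemma p_F: "p t \<in> borel_measurable (F t)"
proof -
  have "G \<in> borel_measurable borel" using G_mono by (rule mono_ennreal_meas)
  with m_F have "(\<lambda>\<omega>. G (m t \<omega>)) \<in> borel_measurable (F t)" by (rule measurable_compose)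
  then show ?thesis unfolding p_def .
qed

lemma Y_le_m: "Y \<omega> \<le> m t \<omega>"
  unfolding Y_def m_def by (rule INF_superset_mono) auto

lemma m_dec: "s \<le> t \<Longrightarrow> m t \<omega> \<le> m s \<omega>"
  unfolding m_def by (rule INF_superset_mono) auto

lemma INF_m: "(INF t. m t \<omega>) = Y \<omega>"
proof (rule antisym)
  show "(INF t. m t \<omega>) \<le> Y \<omega>" unfolding Y_def
  proof (rule INF_greatest)
    fix s
    have "(INF t. m t \<omega>) \<le> m s \<omega>" by (rule INF_lower) simp
    also have "m s \<omega> \<le> 1 / ennreal (M s \<omega>)" unfolding m_def by (rule INF_lower) simp
    finally show "(INF t. m t \<omega>) \<le> 1 / ennreal (M s \<omega>)" .
  qed
  show "Y \<omega> \<le> (INF t. m t \<omega>)" by (rule INF_greatest) (rule Y_le_m)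
qed

lemma G_cont_above:
  assumes "decseq y"
  shows "(\<lambda>n. G (y n)) \<longlonglongrightarrow> G (INF n. y n)"
proof -
  have lim: "(\<lambda>n. measure Q {\<omega>\<in>space Q. Y \<omega> \<le> y n}) \<longlonglongrightarrow> measure Q (\<Inter>n. {\<omega>\<in>space Q. Y \<omega> \<le> y n})"
  proof (intro finite_Lim_measure_decseq)
    show "range (\<lambda>n. {\<omega>\<in>space Q. Y \<omega> \<le> y n}) \<subseteq> sets Q" by auto
    show "decseq (\<lambda>n. {\<omega>\<in>space Q. Y \<omega> \<le> y n})" unfolding decseq_def
    proof (intro allI impI subsetI)
      fix a b w assume "a \<le> b" "w \<in> {\<omega>\<in>space Q. Y \<omega> \<le> y b}"
      moreover have "y b \<le> y a" using assms \<open>a \<le> b\<close> unfolding decseq_def by blast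
      ultimately have "w \<in> space Q" "Y w \<le> y a" using order.trans by auto
      then show "w \<in> {\<omega>\<in>space Q. Y \<omega> \<le> y a}" by simp
    qed
  qed
  have eq: "(\<Inter>n. {\<omega>\<in>space Q. Y \<omega> \<le> y n}) = {\<omega>\<in>space Q. Y \<omega> \<le> (INF n. y n)}"
    by (rule set_eqI) (simp add: le_INF_iff)
  show ?thesis unfolding G_def eq[symmetric] by (rule lim)
qed

lemma p_lim: "(\<lambda>t. p t \<omega>) \<longlonglongrightarrow> G (Y \<omega>)"
proof -
  have "decseq (\<lambda>t. m t \<omega>)" by (auto simp: decseq_def m_dec)
  from G_cont_above[OF this] show ?thesis unfolding p_def INF_m .
qed

lemma p_ge: "G (Y \<omega>) \<le> p t \<omega>"
  unfolding p_def by (rule monoD[OF G_mono Y_le_m])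

lemma Y_atom: "measure Q {\<omega>\<in>space Q. Y \<omega> = x} = 0"
  using atomless[of x] unfolding Y_def .

lemma Yeq_sets[measurable]: "{\<omega>\<in>space Q. Y \<omega> = y} \<in> sets Q"
  by measurable

definition "c \<alpha> = Sup {y. G y \<le> \<alpha>}"

lemma G_below: "y < c \<alpha> \<Longrightarrow> G y \<le> \<alpha>"
proof -
  assume "y < c \<alpha>"
  then obtain z where z: "G z \<le> \<alpha>" "y < z" unfolding c_def less_Sup_iff by blast
  have "G y \<le> G z" using G_mono less_imp_le[OF z(2)] by (rule monoD)
  with z(1) show ?thesis by linarith
qed

lemma le_c: "G y \<le> \<alpha> \<Longrightarrow> y \<le> c \<alpha>"
  unfolding c_def by (rule Sup_upper) simp

lemma G_c_le: assumes "0 \<le> \<alpha>" shows "G (c \<alpha>) \<le> \<alpha>"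
proof (cases "c \<alpha> = 0")
  case True
  have "{\<omega>\<in>space Q. Y \<omega> \<le> 0} = {\<omega>\<in>space Q. Y \<omega> = 0}" by auto
  then have "G 0 = 0" unfolding G_def using Y_atom[of 0] by simp
  with True assms show ?thesis by simp
next
  case False
  then have "0 < c \<alpha>" using not_gr_zero by blast
  from approx_from_below_dense_linorder[OF this] obtain u where
    u: "\<And>n. u n < c \<alpha>" "u \<longlonglongrightarrow> c \<alpha>" by blast
  define v where "v n = Max (u ` {..n})" for n
  have v_lt: "v n < c \<alpha>" for n unfolding v_def using u(1) by (subst Max_less_iff) auto
  have u_le_v: "u n \<le> v n" for n unfolding v_def by (rule Max_ge) auto
  have v_inc: "incseq v" unfolding incseq_def v_def by (auto intro!: Max_mono)
  define A where "A n = {\<omega>\<in>space Q. Y \<omega> \<le> v n}" for n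
  have A_inc: "incseq A" unfolding incseq_def A_def
  proof (intro allI impI subsetI)
    fix a b w assume "a \<le> b" "w \<in> {\<omega>\<in>space Q. Y \<omega> \<le> v a}"
    moreover have "v a \<le> v b" using v_inc \<open>a \<le> b\<close> unfolding incseq_def by blast
    ultimately have "w \<in> space Q" "Y w \<le> v b" using order.trans by auto
    then show "w \<in> {\<omega>\<in>space Q. Y \<omega> \<le> v b}" by simp
  qed
  have A_sets: "range A \<subseteq> sets Q" unfolding A_def by auto
  have lim: "(\<lambda>n. measure Q (A n)) \<longlonglongrightarrow> measure Q (\<Union>n. A n)"
    using A_sets A_inc by (rule finite_Lim_measure_incseq)
  have "measure Q (A n) \<le> \<alpha>" for n unfolding A_def using G_below[OF v_lt[of n]] unfolding G_def .
  then have U_le: "measure Q (\<Union>n. A n) \<le> \<alpha>" using lim by (intro LIMSEQ_le_const2) auto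
  have sub: "{\<omega>\<in>space Q. Y \<omega> \<le> c \<alpha>} \<subseteq> (\<Union>n. A n) \<union> {\<omega>\<in>space Q. Y \<omega> = c \<alpha>}"
  proof
    fix w assume w: "w \<in> {\<omega>\<in>space Q. Y \<omega> \<le> c \<alpha>}"
    show "w \<in> (\<Union>n. A n) \<union> {\<omega>\<in>space Q. Y \<omega> = c \<alpha>}"
    proof (cases "Y w = c \<alpha>")
      case True with w show ?thesis by simp
    next
      case False
      with w have "Y w < c \<alpha>" by (simp add: order_less_le)
      from order_tendstoD(1)[OF u(2) this] obtain n where "Y w < u n"
        by (auto simp: eventually_sequentially)
      with u_le_v[of n] have "Y w \<le> v n" by simp
      with w have "w \<in> A n" unfolding A_def by simp
      then show ?thesis by blast
    qed
  qed
  have "G (c \<alpha>) \<le> measure Q ((\<Union>n. A n) \<union> {\<omega>\<in>space Q. Y \<omega> = c \<alpha>})"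
    unfolding G_def using sub A_sets by (intro finite_measure_mono) auto
  also have "\<dots> \<le> measure Q (\<Union>n. A n) + measure Q {\<omega>\<in>space Q. Y \<omega> = c \<alpha>}"
    using A_sets by (intro measure_Un_le) auto
  also have "\<dots> \<le> \<alpha>" using U_le Y_atom by simp
  finally show ?thesis .
qed

lemma G_top: "G top = 1"
proof -
  have "{\<omega>\<in>space Q. Y \<omega> \<le> top} = space Q" by auto
  then show ?thesis unfolding G_def by (simp add: prob_space)
qed

lemma G_c_ge: assumes "\<alpha> \<le> 1" shows "\<alpha> \<le> G (c \<alpha>)"
proof (cases "c \<alpha> = top")
  case True then show ?thesis using G_top assms by simp
next
  case False
  then have "c \<alpha> < top" by (simp add: top.not_eq_extremum)
  from approx_from_above_dense_linorder[OF this] obtain u where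
    u: "\<And>n. c \<alpha> < u n" "u \<longlonglongrightarrow> c \<alpha>" by blast
  define w where "w n = Min (u ` {..n})" for n
  have w_gt: "c \<alpha> < w n" for n unfolding w_def using u(1) by (subst Min_gr_iff) auto
  have w_le_u: "w n \<le> u n" for n unfolding w_def by (rule Min_le) auto
  have w_dec: "decseq w" unfolding decseq_def w_def by (auto intro!: Min_antimono)
  have "(INF n. w n) = c \<alpha>"
  proof (rule antisym)
    show "c \<alpha> \<le> (INF n. w n)" by (rule INF_greatest) (rule less_imp_le[OF w_gt])
    have "(INF n. w n) \<le> u n" for n using INF_lower[of n UNIV w] w_le_u[of n] by simp
    then show "(INF n. w n) \<le> c \<alpha>" using u(2) by (intro LIMSEQ_le_const) auto
  qed
  with G_cont_above[OF w_dec] have lim: "(\<lambda>n. G (w n)) \<longlonglongrightarrow> G (c \<alpha>)" by simp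
  have "\<alpha> < G (w n)" for n
  proof (rule ccontr)
    assume "\<not> \<alpha> < G (w n)"
    then have "w n \<le> c \<alpha>" by (intro le_c) simp
    with w_gt[of n] show False by simp
  qed
  then show ?thesis using lim by (intro LIMSEQ_le_const) (auto intro: less_imp_le)
qed

lemma G_c: "0 \<le> \<alpha> \<Longrightarrow> \<alpha> \<le> 1 \<Longrightarrow> G (c \<alpha>) = \<alpha>"
  by (rule antisym[OF G_c_le G_c_ge])

lemma GY_set: "0 \<le> \<alpha> \<Longrightarrow> {\<omega>\<in>space Q. G (Y \<omega>) \<le> \<alpha>} = {\<omega>\<in>space Q. Y \<omega> \<le> c \<alpha>}"
proof (rule set_eqI)
  fix w assume a: "0 \<le> \<alpha>"
  have "G (Y w) \<le> \<alpha> \<longleftrightarrow> Y w \<le> c \<alpha>"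
  proof
    assume "G (Y w) \<le> \<alpha>" then show "Y w \<le> c \<alpha>" by (rule le_c)
  next
    assume "Y w \<le> c \<alpha>"
    with G_mono have "G (Y w) \<le> G (c \<alpha>)" by (rule monoD)
    with G_c_le[OF a] show "G (Y w) \<le> \<alpha>" by linarith
  qed
  then show "w \<in> {\<omega>\<in>space Q. G (Y \<omega>) \<le> \<alpha>} \<longleftrightarrow> w \<in> {\<omega>\<in>space Q. Y \<omega> \<le> c \<alpha>}" by simp
qed

lemma GY_le: assumes a: "0 \<le> \<alpha>" shows "measure Q {\<omega>\<in>space Q. G (Y \<omega>) \<le> \<alpha>} \<le> \<alpha>"
proof -
  have "measure Q {\<omega>\<in>space Q. G (Y \<omega>) \<le> \<alpha>} = measure Q {\<omega>\<in>space Q. Y \<omega> \<le> c \<alpha>}"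
    using GY_set[OF a] by (rule arg_cong)
  also have "\<dots> = G (c \<alpha>)" unfolding G_def ..
  finally have "measure Q {\<omega>\<in>space Q. G (Y \<omega>) \<le> \<alpha>} = G (c \<alpha>)" .
  with G_c_le[OF a] show ?thesis by linarith
qed

lemma GY_eq: "0 \<le> \<alpha> \<Longrightarrow> \<alpha> \<le> 1 \<Longrightarrow> measure Q {\<omega>\<in>space Q. Y \<omega> \<le> c \<alpha>} = \<alpha>"
  using G_c unfolding G_def .

definition "IM B r = (\<integral>\<omega>. indicator B \<omega> * M r \<omega> \<partial>Q)"

lemma IM_int: "B \<in> sets Q \<Longrightarrow> integrable Q (\<lambda>\<omega>. indicator B \<omega> * M r \<omega>)"
  using integrable_mult_indicator[of B Q "M r"] M_int[of r] by simp

lemma IM_mart: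
  assumes B: "B \<in> sets (F s)" and sr: "s \<le> r"
  shows "IM B r = IM B s"
proof -
  interpret sigma_finite_subalgebra Q "F s" by (rule sfs)
  have BQ: "B \<in> sets Q" using B Fsets by blast
  have ae: "AE x in Q. real_cond_exp Q (F s) (M r) x = M s x"
    using mart sr unfolding martingale_def by blast
  have ae2: "AE x in Q. indicator B x *\<^sub>R real_cond_exp Q (F s) (M r) x = indicator B x *\<^sub>R M s x"
    using ae by (rule eventually_mono) simp
  have i1: "integrable Q (\<lambda>x. indicator B x *\<^sub>R real_cond_exp Q (F s) (M r) x)"
    by (rule integrable_mult_indicator[OF BQ real_cond_exp_int(1)[OF M_int]])
  have i2: "integrable Q (\<lambda>x. indicator B x *\<^sub>R M s x)"
    by (rule integrable_mult_indicator[OF BQ M_int])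
  have "(\<integral>x\<in>B. M r x \<partial>Q) = (\<integral>x\<in>B. real_cond_exp Q (F s) (M r) x \<partial>Q)"
    by (rule real_cond_exp_intA[OF M_int B])
  also have "\<dots> = (\<integral>x\<in>B. M s x \<partial>Q)" unfolding set_lebesgue_integral_def
    using borel_measurable_integrable[OF i1] borel_measurable_integrable[OF i2] ae2
    by (rule integral_cong_AE)
  finally show ?thesis unfolding IM_def set_lebesgue_integral_def by simp
qed

lemma IM_split:
  assumes "B \<in> sets Q" "C \<in> sets Q"
  shows "IM B r = IM (B \<inter> C) r + IM (B - C) r"
proof -
  have "IM B r = (\<integral>\<omega>. indicator (B \<inter> C) \<omega> * M r \<omega> + indicator (B - C) \<omega> * M r \<omega> \<partial>Q)"
    unfolding IM_def by (rule Bochner_Integration.integral_cong) (auto split: split_indicator)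
  also have "\<dots> = IM (B \<inter> C) r + IM (B - C) r" unfolding IM_def
    using assms by (intro Bochner_Integration.integral_add IM_int) auto
  finally show ?thesis .
qed

lemma IM_lower:
  assumes "B \<in> sets Q" "\<And>\<omega>. \<omega> \<in> B \<Longrightarrow> K \<le> M r \<omega>"
  shows "K * measure Q B \<le> IM B r"
proof -
  have "K * measure Q B = (\<integral>\<omega>. indicator B \<omega> * K \<partial>Q)"
  proof -
    have e1: "(\<integral>\<omega>. indicator B \<omega> * K \<partial>Q) = (\<integral>\<omega>. indicator B \<omega> \<partial>Q) * K"
      by (rule integral_mult_left_zero)
    have bi: "B \<inter> space Q = B" using sets.sets_into_space[OF assms(1)] by blast
    have e2: "(\<integral>\<omega>. indicator B \<omega> \<partial>Q) * K = measure Q B * K" unfolding Bochner_Integration.integral_indicator bi ..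
    show ?thesis unfolding e1 e2 by (rule mult.commute)
  qed
  also have "\<dots> \<le> IM B r" unfolding IM_def
  proof (rule integral_mono)
    show "integrable Q (\<lambda>\<omega>. indicator B \<omega> * K)"
      using integrable_mult_indicator[OF assms(1), of "\<lambda>_. K"] by simp
    show "integrable Q (\<lambda>\<omega>. indicator B \<omega> * M r \<omega>)" by (rule IM_int[OF assms(1)])
    show "indicator B \<omega> * K \<le> indicator B \<omega> * M r \<omega>" for \<omega>
      using assms(2)[of \<omega>] by (auto split: split_indicator)
  qed
  finally show ?thesis .
qed

lemma IM_nonneg: "B \<in> sets Q \<Longrightarrow> 0 \<le> IM B r"
  unfolding IM_def
  by (rule integral_nonneg_AE) (use Mnn[of r] in \<open>auto elim!: eventually_mono split: split_indicator\<close>)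

definition "EE t K n = {\<omega>\<in>space Q. \<exists>s\<in>{t..<t+n}. K \<le> M s \<omega>}"

lemma F_Q: "A \<in> sets (F t) \<Longrightarrow> A \<in> sets Q"
  using Fsets by blast

lemma EE_F: "EE t K n \<in> sets (F (t+n))"
proof -
  have [measurable]: "M s \<in> borel_measurable (F (t+n))" if "s \<in> {t..<t+n}" for s
    using M_F that by auto
  have "EE t K n = {\<omega>\<in>space (F (t+n)). \<exists>s\<in>{t..<t+n}. K \<le> M s \<omega>}"
    unfolding EE_def Fspace ..
  also have "\<dots> \<in> sets (F (t+n))" by measurable
  finally show ?thesis .
qed

lemma C_F: "{\<omega>\<in>space Q. K \<le> M r \<omega>} \<in> sets (F r)"
proof -
  have [measurable]: "M r \<in> borel_measurable (F r)" using M_F by auto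
  have "{\<omega>\<in>space Q. K \<le> M r \<omega>} = {\<omega>\<in>space (F r). K \<le> M r \<omega>}"
    unfolding Fspace ..
  also have "\<dots> \<in> sets (F r)" by measurable
  finally show ?thesis .
qed

lemma EE_0: "EE t K 0 = {}"
  unfolding EE_def by auto

lemma EE_Suc: "EE t K (Suc n) = EE t K n \<union> {\<omega>\<in>space Q. K \<le> M (t+n) \<omega>}"
  unfolding EE_def by (auto simp: less_Suc_eq)

lemma doob_step:
  assumes A: "A \<in> sets (F t)"
  shows "K * measure Q (A \<inter> EE t K n) + IM (A - EE t K n) (t+n) \<le> IM A t"
proof (induction n)
  case 0
  show ?case by (simp add: EE_0)
next
  case (Suc n)
  define E where "E = EE t K n"
  define C where "C = {\<omega>\<in>space Q. K \<le> M (t+n) \<omega>}"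
  have AF: "A \<in> sets (F (t+n))" using Fmono[of t "t+n"] A by auto
  have EF: "E \<in> sets (F (t+n))" unfolding E_def by (rule EE_F)
  have CF: "C \<in> sets (F (t+n))" unfolding C_def by (rule C_F)
  have AQ: "A \<in> sets Q" and EQ: "E \<in> sets Q" and CQ: "C \<in> sets Q"
    using AF EF CF by (auto intro: F_Q)
  have ES: "EE t K (Suc n) = E \<union> C" unfolding E_def C_def by (rule EE_Suc)
  have m1: "measure Q (A \<inter> EE t K (Suc n)) = measure Q (A \<inter> E) + measure Q ((A - E) \<inter> C)"
  proof -
    have "A \<inter> EE t K (Suc n) = (A \<inter> E) \<union> ((A - E) \<inter> C)" unfolding ES by blast
    moreover have "measure Q ((A \<inter> E) \<union> ((A - E) \<inter> C)) = measure Q (A \<inter> E) + measure Q ((A - E) \<inter> C)"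
      using AQ EQ CQ by (intro finite_measure_Union) auto
    ultimately show ?thesis by simp
  qed
  have d1: "A - EE t K (Suc n) = (A - E) - C" unfolding ES by blast
  have sp: "IM (A - E) (t+n) = IM ((A - E) \<inter> C) (t+n) + IM ((A - E) - C) (t+n)"
    using AQ EQ CQ by (intro IM_split) auto
  have low: "K * measure Q ((A - E) \<inter> C) \<le> IM ((A - E) \<inter> C) (t+n)"
    using AQ EQ CQ by (intro IM_lower) (auto simp: C_def)
  have mg: "IM ((A - E) - C) (t + Suc n) = IM ((A - E) - C) (t+n)"
    using AF EF CF by (intro IM_mart) auto
  have IH: "K * measure Q (A \<inter> E) + IM (A - E) (t+n) \<le> IM A t"
    using Suc.IH unfolding E_def .
  have "K * measure Q (A \<inter> EE t K (Suc n)) + IM (A - EE t K (Suc n)) (t + Suc n)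
      = K * measure Q (A \<inter> E) + K * measure Q ((A - E) \<inter> C) + IM ((A - E) - C) (t+n)"
    unfolding m1 d1 mg by (simp add: distrib_left)
  also have "\<dots> \<le> K * measure Q (A \<inter> E) + IM (A - E) (t+n)"
    using low sp by linarith
  also have "\<dots> \<le> IM A t" by (rule IH)
  finally show ?case .
qed

lemma doob:
  assumes A: "A \<in> sets (F t)" and K: "0 < K"
  shows "measure Q (A \<inter> {\<omega>\<in>space Q. \<exists>s\<ge>t. K \<le> M s \<omega>}) \<le> IM A t / K"
proof -
  have AQ: "A \<in> sets Q" using A by (rule F_Q)
  define B where "B n = A \<inter> EE t K n" for n
  have BQ: "range B \<subseteq> sets Q" unfolding B_def using AQ EE_F F_Q by blast
  have Binc: "incseq B" unfolding incseq_def B_def EE_def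
  proof (intro allI impI subsetI)
    fix a b w assume ab: "a \<le> b" and w: "w \<in> A \<inter> {\<omega>\<in>space Q. \<exists>s\<in>{t..<t+a}. K \<le> M s \<omega>}"
    then obtain s where "s \<in> {t..<t+a}" "K \<le> M s w" by blast
    moreover have "s \<in> {t..<t+b}" using ab \<open>s \<in> {t..<t+a}\<close> by auto
    ultimately show "w \<in> A \<inter> {\<omega>\<in>space Q. \<exists>s\<in>{t..<t+b}. K \<le> M s \<omega>}" using w by blast
  qed
  have Ueq: "(\<Union>n. B n) = A \<inter> {\<omega>\<in>space Q. \<exists>s\<ge>t. K \<le> M s \<omega>}"
  proof
    show "(\<Union>n. B n) \<subseteq> A \<inter> {\<omega>\<in>space Q. \<exists>s\<ge>t. K \<le> M s \<omega>}"
      unfolding B_def EE_def by auto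
    show "A \<inter> {\<omega>\<in>space Q. \<exists>s\<ge>t. K \<le> M s \<omega>} \<subseteq> (\<Union>n. B n)"
    proof
      fix w assume "w \<in> A \<inter> {\<omega>\<in>space Q. \<exists>s\<ge>t. K \<le> M s \<omega>}"
      then obtain s where w: "w \<in> A" "w \<in> space Q" "t \<le> s" "K \<le> M s w" by blast
      then have "s \<in> {t..<t + Suc (s - t)}" by auto
      with w have "w \<in> B (Suc (s - t))" unfolding B_def EE_def by blast
      then show "w \<in> (\<Union>n. B n)" by blast
    qed
  qed
  have lim: "(\<lambda>n. measure Q (B n)) \<longlonglongrightarrow> measure Q (\<Union>n. B n)"
    using BQ Binc by (rule finite_Lim_measure_incseq)
  have "measure Q (B n) \<le> IM A t / K" for n
  proof -
    have "K * measure Q (B n) + IM (A - EE t K n) (t+n) \<le> IM A t"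
      unfolding B_def by (rule doob_step[OF A])
    moreover have "0 \<le> IM (A - EE t K n) (t+n)"
      using AQ EE_F[of t K n] by (intro IM_nonneg) (auto intro: F_Q)
    ultimately have "K * measure Q (B n) \<le> IM A t" by linarith
    then show ?thesis using K by (simp add: field_simps)
  qed
  then have "measure Q (\<Union>n. B n) \<le> IM A t / K" using lim by (intro LIMSEQ_le_const2) auto
  then show ?thesis unfolding Ueq .
qed

lemma inv_gt: "0 < r \<Longrightarrow> (ennreal r < 1 / ennreal x) \<longleftrightarrow> x < 1 / r"
proof (cases "x \<le> 0")
  case True
  assume r: "0 < r"
  then have "ennreal x = 0" using True by (simp add: ennreal_eq_0_iff)
  then have "1 / ennreal x = top" by (simp add: divide_ennreal_def ennreal_inverse_zero)
  moreover have "x < 1 / r" using True r by (smt (verit) divide_pos_pos)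
  ultimately show ?thesis by simp
next
  case False
  assume r: "0 < r"
  then have x: "0 < x" using False by simp
  have "1 / ennreal x = ennreal (1 / x)" using divide_ennreal[of 1 x] x by simp
  then have "(ennreal r < 1 / ennreal x) \<longleftrightarrow> r < 1 / x"
    using ennreal_less_iff[OF less_imp_le[OF r], of "1/x"] by simp
  also have "\<dots> \<longleftrightarrow> x < 1 / r" using x r by (simp add: field_simps)
  finally show ?thesis .
qed

lemma G_0: "G 0 = 0"
proof -
  have "{\<omega>\<in>space Q. Y \<omega> \<le> 0} = {\<omega>\<in>space Q. Y \<omega> = 0}" by auto
  then show ?thesis unfolding G_def using Y_atom[of 0] by simp
qed

lemma int_ind_const: "B \<in> sets Q \<Longrightarrow> (\<integral>\<omega>. indicator B \<omega> * K \<partial>Q) = K * measure Q B"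
proof -
  assume a: "B \<in> sets Q"
  have e1: "(\<integral>\<omega>. indicator B \<omega> * K \<partial>Q) = (\<integral>\<omega>. indicator B \<omega> \<partial>Q) * K"
    by (rule integral_mult_left_zero)
  have bi: "B \<inter> space Q = B" using sets.sets_into_space[OF a] by blast
  have e2: "(\<integral>\<omega>. indicator B \<omega> \<partial>Q) * K = measure Q B * K"
    unfolding Bochner_Integration.integral_indicator bi ..
  show ?thesis unfolding e1 e2 by (rule mult.commute)
qed

lemma GY_meas[measurable]: "(\<lambda>\<omega>. G (Y \<omega>)) \<in> borel_measurable Q"
proof -
  have "G \<in> borel_measurable borel" using G_mono by (rule mono_ennreal_meas)
  with Y_meas show ?thesis by (rule measurable_compose)
qed

lemma stopped_p_ge: "G (Y \<omega>) \<le> stopped p \<tau> \<omega>"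
proof (cases "\<tau> \<omega>")
  case (enat t)
  then show ?thesis unfolding stopped_def using p_ge by simp
next
  case infinity
  have "(\<lambda>t. ereal (p t \<omega>)) \<longlonglongrightarrow> ereal (G (Y \<omega>))" using p_lim unfolding lim_ereal .
  then have "liminf (\<lambda>t. ereal (p t \<omega>)) = ereal (G (Y \<omega>))"
    by (intro lim_imp_Liminf) simp_all
  then show ?thesis unfolding stopped_def using infinity by simp
qed

lemma p_valid: "anytime_valid Q F p"
  unfolding anytime_valid_def
proof (intro conjI allI impI ballI)
  fix t show "p t \<in> borel_measurable (F t)" by (rule p_F)
  fix \<omega> show "0 \<le> p t \<omega>" "p t \<omega> \<le> 1" unfolding p_def by (rule G_01)+
next
  fix \<tau> and \<alpha> :: real assume a: "0 \<le> \<alpha>" "\<alpha> \<le> 1"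
  have "measure Q {\<omega>\<in>space Q. stopped p \<tau> \<omega> \<le> \<alpha>} \<le> measure Q {\<omega>\<in>space Q. G (Y \<omega>) \<le> \<alpha>}"
  proof (rule finite_measure_mono)
    show "{\<omega>\<in>space Q. stopped p \<tau> \<omega> \<le> \<alpha>} \<subseteq> {\<omega>\<in>space Q. G (Y \<omega>) \<le> \<alpha>}"
      using stopped_p_ge order.trans by blast
    show "{\<omega>\<in>space Q. G (Y \<omega>) \<le> \<alpha>} \<in> sets Q" by measurable
  qed
  also have "\<dots> \<le> \<alpha>" using a(1) by (rule GY_le)
  finally show "measure Q {\<omega>\<in>space Q. stopped p \<tau> \<omega> \<le> \<alpha>} \<le> \<alpha>" .
qed

lemma key:
  assumes av: "anytime_valid Q F p'"
    and aedom: "AE \<omega> in Q. \<forall>t. p' t \<omega> \<le> p t \<omega>"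
    and Adef: "A = {\<omega>\<in>space Q. p' t0 \<omega> \<le> \<alpha> \<and> \<alpha> < p t0 \<omega>}"
    and Apos: "measure Q A > 0"
  shows False
proof -
  have p'F: "p' t \<in> borel_measurable (F t)" for t using av unfolding anytime_valid_def by auto
  have p'b: "0 \<le> p' t \<omega> \<and> p' t \<omega> \<le> 1" if "\<omega> \<in> space Q" for t \<omega>
    using av that unfolding anytime_valid_def by auto
  have p'v: "measure Q {\<omega>\<in>space Q. stopped p' \<tau> \<omega> \<le> \<alpha>} \<le> \<alpha>"
    if "stopping_time_inf F (space Q) \<tau>" "0 \<le> \<alpha>" "\<alpha> \<le> 1" for \<tau>
    using av that unfolding anytime_valid_def by auto
  have p'Q[measurable]: "p' t \<in> borel_measurable Q" for t
    using measurable_from_subalg[OF subalg p'F] .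
  have pQ[measurable]: "p t \<in> borel_measurable Q" for t
    using measurable_from_subalg[OF subalg p_F] .
  have p't0[measurable]: "p' t0 \<in> borel_measurable (F t0)" "p t0 \<in> borel_measurable (F t0)"
    using p'F p_F by auto
  have AF: "A \<in> sets (F t0)"
  proof -
    have "A = {\<omega>\<in>space (F t0). p' t0 \<omega> \<le> \<alpha> \<and> \<alpha> < p t0 \<omega>}" unfolding Adef Fspace ..
    also have "\<dots> \<in> sets (F t0)" by measurable
    finally show ?thesis .
  qed
  have AQ[measurable]: "A \<in> sets Q" using AF by (rule F_Q)
  have "A \<noteq> {}" using Apos by auto
  then obtain \<omega>0 where \<omega>0: "\<omega>0 \<in> A" by blast
  then have \<omega>0s: "\<omega>0 \<in> space Q" "p' t0 \<omega>0 \<le> \<alpha>" "\<alpha> < p t0 \<omega>0" unfolding Adef by auto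
  have a0: "0 \<le> \<alpha>" using p'b[OF \<omega>0s(1), of t0] \<omega>0s(2) by linarith
  have a1: "\<alpha> \<le> 1" using G_01(2)[of "m t0 \<omega>0"] \<omega>0s(3) unfolding p_def by linarith
  define cc where "cc = c \<alpha>"
  define B where "B = {\<omega>\<in>space Q. Y \<omega> \<le> cc}"
  have BQ[measurable]: "B \<in> sets Q" unfolding B_def by measurable
  have mB: "measure Q B = \<alpha>" unfolding B_def cc_def using a0 a1 by (rule GY_eq)
  have Gcc: "G cc = \<alpha>" unfolding cc_def using a0 a1 by (rule G_c)
  have mA: "cc < m t0 \<omega>" if "\<omega> \<in> A" for \<omega>
  proof (rule ccontr)
    assume "\<not> cc < m t0 \<omega>"
    then have "m t0 \<omega> \<le> cc" by simp
    with G_mono have "G (m t0 \<omega>) \<le> G cc" by (rule monoD)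
    with that Gcc show False unfolding Adef p_def by auto
  qed
  define \<tau> where "\<tau> \<omega> = (if \<omega> \<in> A then enat t0 else \<infinity>)" for \<omega>
  have st: "stopping_time_inf F (space Q) \<tau>" unfolding stopping_time_inf_def
  proof
    fix s
    show "{\<omega> \<in> space Q. \<tau> \<omega> = enat s} \<in> sets (F s)"
    proof (cases "s = t0")
      case True
      have e: "{\<omega> \<in> space Q. \<tau> \<omega> = enat s} = A" unfolding \<tau>_def using True Adef by auto
      show ?thesis unfolding e using AF True by simp
    next
      case False
      have e: "{\<omega> \<in> space Q. \<tau> \<omega> = enat s} = {}" unfolding \<tau>_def using False by auto
      show ?thesis unfolding e by (rule sets.empty_sets)
    qed
  qed
  define finf where "finf \<omega> = real_of_ereal (liminf (\<lambda>t. ereal (p' t \<omega>)))" for \<omega>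
  have finf_meas[measurable]: "finf \<in> borel_measurable Q" unfolding finf_def by measurable
  have stop_eq: "stopped p' \<tau> \<omega> = (if \<omega> \<in> A then p' t0 \<omega> else finf \<omega>)" for \<omega>
    unfolding stopped_def \<tau>_def finf_def by simp
  define S where "S = {\<omega>\<in>space Q. stopped p' \<tau> \<omega> \<le> \<alpha>}"
  have S_eq: "S = {\<omega>\<in>space Q. (if \<omega> \<in> A then p' t0 \<omega> else finf \<omega>) \<le> \<alpha>}"
    unfolding S_def stop_eq ..
  have SQ: "S \<in> sets Q" unfolding S_eq by measurable
  have mS: "measure Q S \<le> \<alpha>" unfolding S_def using st a0 a1 by (rule p'v)
  have finf_le: "finf \<omega> \<le> G (Y \<omega>)" if "\<omega> \<in> space Q" "\<forall>t. p' t \<omega> \<le> p t \<omega>" for \<omega>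
  proof -
    have "liminf (\<lambda>t. ereal (p' t \<omega>)) \<le> liminf (\<lambda>t. ereal (p t \<omega>))"
      using that(2) by (intro Liminf_mono) simp
    also have "(\<lambda>t. ereal (p t \<omega>)) \<longlonglongrightarrow> ereal (G (Y \<omega>))" using p_lim unfolding lim_ereal .
    then have "liminf (\<lambda>t. ereal (p t \<omega>)) = ereal (G (Y \<omega>))"
      by (intro lim_imp_Liminf) simp_all
    finally have le: "liminf (\<lambda>t. ereal (p' t \<omega>)) \<le> ereal (G (Y \<omega>))" .
    have ge: "0 \<le> liminf (\<lambda>t. ereal (p' t \<omega>))"
      using p'b[OF that(1)] by (intro Liminf_bounded) simp
    show ?thesis unfolding finf_def using le ge
      by (cases "liminf (\<lambda>t. ereal (p' t \<omega>))") auto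
  qed
  have ae_sub: "AE \<omega> in Q. \<omega> \<in> A \<union> (B - A) \<longrightarrow> \<omega> \<in> S"
    using aedom
  proof (rule eventually_mono)
    fix \<omega> assume dom: "\<forall>t. p' t \<omega> \<le> p t \<omega>"
    show "\<omega> \<in> A \<union> (B - A) \<longrightarrow> \<omega> \<in> S"
    proof
      assume w: "\<omega> \<in> A \<union> (B - A)"
      then have ws: "\<omega> \<in> space Q" unfolding Adef B_def by auto
      show "\<omega> \<in> S"
      proof (cases "\<omega> \<in> A")
        case True
        then show ?thesis unfolding S_eq using ws Adef by auto
      next
        case False
        with w have "Y \<omega> \<le> cc" unfolding B_def by auto
        with G_mono have "G (Y \<omega>) \<le> G cc" by (rule monoD)
        with finf_le[OF ws dom] Gcc have "finf \<omega> \<le> \<alpha>" by linarith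
        then show ?thesis unfolding S_eq using ws False by auto
      qed
    qed
  qed
  have "measure Q (A \<union> (B - A)) \<le> measure Q S"
    using ae_sub SQ by (rule finite_measure_mono_AE)
  moreover have "measure Q (A \<union> (B - A)) = measure Q A + measure Q (B - A)"
    using AQ BQ by (intro finite_measure_Union) auto
  moreover have "measure Q (B - A) = measure Q B - measure Q (B \<inter> A)"
    using BQ AQ by (rule finite_measure_Diff')
  ultimately have star: "measure Q A \<le> measure Q (B \<inter> A)" using mS mB by linarith
  show False
  proof (cases "\<alpha> = 0")
    case True
    have "measure Q (B \<inter> A) \<le> measure Q B" using BQ by (intro finite_measure_mono) auto
    with True mB star Apos show False by linarith
  next
    case False
    then have apos: "0 < \<alpha>" using a0 by simp
    have "cc \<noteq> 0" using Gcc G_0 apos by auto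
    have "cc < top" using mA[OF \<omega>0] top.not_eq_extremum by fastforce
    then obtain r0 where r0: "cc = ennreal r0" "0 \<le> r0" by (cases cc) auto
    with \<open>cc \<noteq> 0\<close> have r0p: "0 < r0" by auto
    define K where "K = 1 / r0"
    have Kp: "0 < K" unfolding K_def using r0p by simp
    have MltK: "M s \<omega> < K" if "\<omega> \<in> A" "s \<le> t0" for \<omega> s
    proof -
      have "m t0 \<omega> \<le> 1 / ennreal (M s \<omega>)" unfolding m_def using that(2) by (intro INF_lower) simp
      with mA[OF that(1)] have "ennreal r0 < 1 / ennreal (M s \<omega>)" unfolding r0(1) by simp
      then show ?thesis unfolding K_def using inv_gt[OF r0p] by simp
    qed
    have mApos: "emeasure Q A \<noteq> 0" using Apos by (simp add: emeasure_eq_measure)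
    have IMlt: "IM A t0 < K * measure Q A"
    proof -
      have "(\<integral>\<omega>. indicator A \<omega> * M t0 \<omega> \<partial>Q) < (\<integral>\<omega>. indicator A \<omega> * K \<partial>Q)"
      proof (rule integral_less_AE[OF IM_int[OF AQ] _ mApos AQ])
        show "integrable Q (\<lambda>\<omega>. indicator A \<omega> * K)"
          using integrable_mult_indicator[OF AQ, of "\<lambda>_. K"] by simp
        show "AE x\<in>A in Q. indicator A x * M t0 x \<noteq> indicator A x * K"
          using MltK by (intro AE_I2) auto
        show "AE x in Q. indicator A x * M t0 x \<le> indicator A x * K"
          using MltK by (intro AE_I2) (auto split: split_indicator intro: less_imp_le)
      qed
      then show ?thesis unfolding IM_def int_ind_const[OF AQ] .
    qed
    define \<mu> where "\<mu> = measure Q A"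
    have mup: "0 < \<mu>" unfolding \<mu>_def using Apos .
    have IMnn: "0 \<le> IM A t0" using AQ by (rule IM_nonneg)
    define K' where "K' = (IM A t0 / \<mu> + K) / 2"
    have IMmu: "IM A t0 / \<mu> < K" using IMlt mup unfolding \<mu>_def[symmetric] by (simp add: field_simps)
    have half: "(x + y) / 2 < y \<and> x < (x + y) / 2" if "x < y" for x y :: real
      using that by auto
    have K'lt: "K' < K" and K'gt: "IM A t0 / \<mu> < K'"
      using half[OF IMmu] unfolding K'_def by auto
    have K'p: "0 < K'" using K'gt IMnn mup by (smt (verit) divide_nonneg_pos)
    have bound: "IM A t0 / K' < \<mu>" using K'gt K'p mup by (simp add: field_simps)
    define r1 where "r1 = 1 / K'"
    have r1p: "0 < r1" unfolding r1_def using K'p by simp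
    have r0r1: "r0 < r1" unfolding r1_def using K'lt Kp K'p r0p unfolding K_def
      by (simp add: field_simps)
    have sub: "B \<inter> A \<subseteq> A \<inter> {\<omega>\<in>space Q. \<exists>s\<ge>t0. K' \<le> M s \<omega>}"
    proof
      fix \<omega> assume w: "\<omega> \<in> B \<inter> A"
      then have ws: "\<omega> \<in> space Q" "\<omega> \<in> A" "Y \<omega> \<le> cc" unfolding B_def by auto
      have "\<exists>s\<ge>t0. K' \<le> M s \<omega>"
      proof (rule ccontr)
        assume "\<not> (\<exists>s\<ge>t0. K' \<le> M s \<omega>)"
        then have small: "M s \<omega> < K'" if "t0 \<le> s" for s using that by force
        have lb: "min (m t0 \<omega>) (ennreal r1) \<le> 1 / ennreal (M s \<omega>)" for s
        proof (cases "s \<le> t0")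
          case True
          have "m t0 \<omega> \<le> 1 / ennreal (M s \<omega>)" unfolding m_def using True by (intro INF_lower) simp
          then show ?thesis by (rule min.coboundedI1)
        next
          case False
          then have "M s \<omega> < 1 / r1" using small[of s] unfolding r1_def by simp
          then have "ennreal r1 < 1 / ennreal (M s \<omega>)" using inv_gt[OF r1p] by simp
          then show ?thesis by (intro min.coboundedI2) simp
        qed
        have l1: "min (m t0 \<omega>) (ennreal r1) \<le> Y \<omega>" unfolding Y_def by (rule INF_greatest) (rule lb)
        have l2: "cc < min (m t0 \<omega>) (ennreal r1)"
          using mA[OF ws(2)] r0r1 r0p unfolding r0(1) by (simp add: ennreal_less_iff)
        have "cc < Y \<omega>" using less_le_trans[OF l2 l1] .
        with ws(3) show False by simp
      qed
      with ws show "\<omega> \<in> A \<inter> {\<omega>\<in>space Q. \<exists>s\<ge>t0. K' \<le> M s \<omega>}" by blast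
    qed
    have "measure Q (B \<inter> A) \<le> measure Q (A \<inter> {\<omega>\<in>space Q. \<exists>s\<ge>t0. K' \<le> M s \<omega>})"
    proof (rule finite_measure_mono[OF sub])
      have [measurable]: "Measurable.pred Q (\<lambda>\<omega>. \<exists>s\<ge>t0. K' \<le> M s \<omega>)" by measurable
      show "A \<inter> {\<omega>\<in>space Q. \<exists>s\<ge>t0. K' \<le> M s \<omega>} \<in> sets Q" by measurable
    qed
    also have "\<dots> \<le> IM A t0 / K'" using AF K'p by (rule doob)
    also have "\<dots> < \<mu>" by (rule bound)
    finally show False using star unfolding \<mu>_def by linarith
  qed
qed

lemma p_adm: "admissible Q F p"
  unfolding admissible_def
proof (intro conjI notI)
  show "anytime_valid Q F p" by (rule p_valid)
next
  assume "\<exists>p'. anytime_valid Q F p' \<and> (\<forall>t. measure Q {\<omega>\<in>space Q. p' t \<omega> \<le> p t \<omega>} = 1) \<and>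
          (\<exists>t. measure Q {\<omega>\<in>space Q. p' t \<omega> < p t \<omega>} > 0)"
  then obtain p' t0 where av: "anytime_valid Q F p'"
    and dom: "\<forall>t. measure Q {\<omega>\<in>space Q. p' t \<omega> \<le> p t \<omega>} = 1"
    and pos: "measure Q {\<omega>\<in>space Q. p' t0 \<omega> < p t0 \<omega>} > 0" by blast
  have p'F: "p' t \<in> borel_measurable (F t)" for t using av unfolding anytime_valid_def by auto
  have p'Q[measurable]: "p' t \<in> borel_measurable Q" for t
    using measurable_from_subalg[OF subalg p'F] .
  have pQ[measurable]: "p t \<in> borel_measurable Q" for t
    using measurable_from_subalg[OF subalg p_F] .
  have ae1: "AE \<omega> in Q. p' t \<omega> \<le> p t \<omega>" for t
  proof -
    have "AE \<omega> in Q. \<omega> \<in> {\<omega>\<in>space Q. p' t \<omega> \<le> p t \<omega>}" using dom by (intro AE_prob_1) simp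
    then show ?thesis by (rule eventually_mono) simp
  qed
  have aedom: "AE \<omega> in Q. \<forall>t. p' t \<omega> \<le> p t \<omega>"
    unfolding AE_all_countable using ae1 by blast
  define Ar where "Ar r = {\<omega>\<in>space Q. p' t0 \<omega> \<le> real_of_rat r \<and> real_of_rat r < p t0 \<omega>}" for r
  have ArQ: "Ar r \<in> sets Q" for r unfolding Ar_def by measurable
  have "\<exists>r. measure Q (Ar r) > 0"
  proof (rule ccontr)
    assume "\<not> (\<exists>r. measure Q (Ar r) > 0)"
    then have z0: "\<not> measure Q (Ar r) > 0" for r by blast
    have z: "measure Q (Ar r) = 0" for r using measure_nonneg[of Q "Ar r"] z0[of r] by linarith
    have "Ar r \<in> null_sets Q" for r
      using z[of r] ArQ[of r] by (intro null_setsI) (simp_all add: emeasure_eq_measure)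
    then have U: "(\<Union>r. Ar r) \<in> null_sets Q" by (rule null_sets_UN)
    have sub: "{\<omega>\<in>space Q. p' t0 \<omega> < p t0 \<omega>} \<subseteq> (\<Union>r. Ar r)"
    proof
      fix \<omega> assume w: "\<omega> \<in> {\<omega>\<in>space Q. p' t0 \<omega> < p t0 \<omega>}"
      then have "p' t0 \<omega> < p t0 \<omega>" by simp
      then obtain x where x: "x \<in> \<rat>" "p' t0 \<omega> < x" "x < p t0 \<omega>"
        by (blast dest: Rats_dense_in_real)
      from x(1) obtain r where "x = real_of_rat r" by (cases rule: Rats_cases) auto
      with x w have "\<omega> \<in> Ar r" unfolding Ar_def by auto
      then show "\<omega> \<in> (\<Union>r. Ar r)" by blast
    qed
    have SQ: "{\<omega>\<in>space Q. p' t0 \<omega> < p t0 \<omega>} \<in> sets Q"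
      using borel_measurable_less[OF p'Q pQ] by simp
    have "{\<omega>\<in>space Q. p' t0 \<omega> < p t0 \<omega>} \<in> null_sets Q"
      using U SQ sub by (rule null_sets_subset)
    then have "measure Q {\<omega>\<in>space Q. p' t0 \<omega> < p t0 \<omega>} = 0" by (rule measure_eq_0_null_sets)
    with pos show False by simp
  qed
  then obtain r where "measure Q (Ar r) > 0" by blast
  then show False by (rule key[OF av aedom Ar_def])
qed

end

theorem corollary1:
  fixes Q :: "'a measure" and U :: "'a \<Rightarrow> real" and X :: "nat \<Rightarrow> 'a \<Rightarrow> 'b"
    and S :: "'b measure" and M :: "nat \<Rightarrow> 'a \<Rightarrow> real"
  assumes "prob_space Q"
    and "U \<in> borel_measurable Q"
    and "distr Q borel U = uniform_measure lborel {0..1}"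
    and "\<And>i. X i \<in> measurable Q S"
    and "prob_space.indep_set Q {U -` B \<inter> space Q | B. B \<in> sets borel} (sets (obs_sigma Q X S))"
    and "martingale Q (filt Q U X S) M"
    and "\<And>t. AE \<omega> in Q. M t \<omega> \<ge> 0"
    and "AE \<omega> in Q. M 0 \<omega> > 0"
    and "\<And>x::ennreal. measure Q {\<omega> \<in> space Q. (INF t. 1 / ennreal (M t \<omega>)) = x} = 0"
  shows "admissible Q (filt Q U X S)
           (\<lambda>t \<omega>. measure Q {\<omega>' \<in> space Q.
                    (INF s. 1 / ennreal (M s \<omega>')) \<le> (INF s\<in>{..t}. 1 / ennreal (M s \<omega>))})"
proof -
  interpret A: avs Q "filt Q U X S" M
  proof (rule avs.intro)
    show "prob_space Q" by fact
  next
    show "avs_axioms Q (filt Q U X S) M"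
    proof (rule avs_axioms.intro)
    fix t show "space (filt Q U X S t) = space Q" by (rule filt_space)
  next
    fix t show "sets (filt Q U X S t) \<subseteq> sets Q" using assms(2,4) by (rule filt_sub)
  next
    fix s t :: nat assume "s \<le> t"
    then show "sets (filt Q U X S s) \<subseteq> sets (filt Q U X S t)" by (rule filt_mono)
  next
    show "martingale Q (filt Q U X S) M" by fact
  next
    fix t show "AE \<omega> in Q. M t \<omega> \<ge> 0" by (rule assms(7))
  next
    fix x :: ennreal
    show "measure Q {\<omega> \<in> space Q. (INF t. 1 / ennreal (M t \<omega>)) = x} = 0" by (rule assms(9))
    qed
  qed
  have eq: "A.p = (\<lambda>t \<omega>. measure Q {\<omega>' \<in> space Q.
                    (INF s. 1 / ennreal (M s \<omega>')) \<le> (INF s\<in>{..t}. 1 / ennreal (M s \<omega>))})"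
    by (intro ext) (simp only: A.p_def A.G_def A.Y_def A.m_def)
  show ?thesis using A.p_adm unfolding eq .
qed

end
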